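(* Let $V$ be a finite nonempty set and $f:\{0,1\}^V\to\{0,1\}^V$ be non-expansive. Every subnetwork of $f$ has a unique fixed point if and only if $f$ has no circular subnetwork (i.e., no subnetwork that is positive-circular or negative-circular).
   Context: $d$ is the Hamming distance on $\{0,1\}^V$; $f$ is non-expansive if $d(f(x),f(y))\le d(x,y)$ for all $x,y$. For nonempty $I\subseteq V$ and $z\in\{0,1\}^{V\setminus I}$, the subnetwork of $f$ induced by $z$ is $h:\{0,1\}^I\to\{0,1\}^I$ with $h(x|_I)=f(x)|_I$ for all $x$ whose restriction to $V\setminus I$ is $z$ ($f$ is a subnetwork of itself). For a network $g$ on $W$ and $x^{j\alpha}$ the point equal to $x$ except its $j$-component is $\alpha$, the global interaction graph $G(g)$ is the signed digraph on $W$ with a positive (resp. negative) arc from $j$ to $i$ iff $g_i(x^{j1})-g_i(x^{j0})=1$ (resp. $=-1$) for at least one $x$. A cycle is a subgraph with at most one arc between any ordered pair of vertices whose underlying unsigned digraph is a directed cycle; positive (negative) if it has an even (odd) number of negative arcs. $g$ is positive-circular (negative-circular) if $G(g)$ itself is a positive (negative) cycle through all vertices of $W$. *)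

theory Defs
  imports Main
begin

text \<open>The vertex set V is the (finite, nonempty) universe of a type 'v::finite.
  Configurations in {0,1}^V are functions 'v => bool (True = 1).
  A configuration on a subset I is represented as a function 'v => bool
  that is False outside I.\<close>

definition hamming :: "('v \<Rightarrow> bool) \<Rightarrow> ('v \<Rightarrow> bool) \<Rightarrow> nat" where
  "hamming x y = card {v. x v \<noteq> y v}"

definition non_expansive :: "(('v::finite \<Rightarrow> bool) \<Rightarrow> ('v \<Rightarrow> bool)) \<Rightarrow> bool" where
  "non_expansive f \<longleftrightarrow> (\<forall>x y. hamming (f x) (f y) \<le> hamming x y)"

definition confs :: "'v set \<Rightarrow> ('v \<Rightarrow> bool) set" where
  "confs I = {y. \<forall>v. v \<notin> I \<longrightarrow> \<not> y v}"

text \<open>Subnetwork of f on I induced by z (only the values of z outside I matter):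
  h(x|_I) = f(x)|_I where x agrees with y on I and with z outside I.\<close>
definition subnet :: "(('v \<Rightarrow> bool) \<Rightarrow> ('v \<Rightarrow> bool)) \<Rightarrow> 'v set \<Rightarrow> ('v \<Rightarrow> bool)
    \<Rightarrow> ('v \<Rightarrow> bool) \<Rightarrow> ('v \<Rightarrow> bool)" where
  "subnet f I z y = (\<lambda>v. if v \<in> I then f (\<lambda>u. if u \<in> I then y u else z u) v else False)"

definition pos_arc :: "(('v \<Rightarrow> bool) \<Rightarrow> ('v \<Rightarrow> bool)) \<Rightarrow> 'v set \<Rightarrow> 'v \<Rightarrow> 'v \<Rightarrow> bool" where
  "pos_arc g W j i \<longleftrightarrow> j \<in> W \<and> i \<in> W \<and>
     (\<exists>x \<in> confs W. g (x(j := True)) i \<and> \<not> g (x(j := False)) i)"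

definition neg_arc :: "(('v \<Rightarrow> bool) \<Rightarrow> ('v \<Rightarrow> bool)) \<Rightarrow> 'v set \<Rightarrow> 'v \<Rightarrow> 'v \<Rightarrow> bool" where
  "neg_arc g W j i \<longleftrightarrow> j \<in> W \<and> i \<in> W \<and>
     (\<exists>x \<in> confs W. \<not> g (x(j := True)) i \<and> g (x(j := False)) i)"

text \<open>G(g) itself is a cycle through all vertices of W: at most one arc per ordered
  pair, and the underlying arc relation is a directed Hamiltonian cycle on W
  (a loop when |W| = 1).\<close>
definition graph_is_full_cycle :: "(('v \<Rightarrow> bool) \<Rightarrow> ('v \<Rightarrow> bool)) \<Rightarrow> 'v set \<Rightarrow> bool" where
  "graph_is_full_cycle g W \<longleftrightarrow>
     (\<forall>j i. \<not> (pos_arc g W j i \<and> neg_arc g W j i)) \<and>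
     (\<exists>vs. distinct vs \<and> set vs = W \<and>
        (\<forall>j i. (pos_arc g W j i \<or> neg_arc g W j i) \<longleftrightarrow>
           (\<exists>k < length vs. j = vs ! k \<and> i = vs ! (Suc k mod length vs))))"

definition positive_circular :: "(('v::finite \<Rightarrow> bool) \<Rightarrow> ('v \<Rightarrow> bool)) \<Rightarrow> 'v set \<Rightarrow> bool" where
  "positive_circular g W \<longleftrightarrow> graph_is_full_cycle g W \<and>
     even (card {(j, i). neg_arc g W j i})"

definition negative_circular :: "(('v::finite \<Rightarrow> bool) \<Rightarrow> ('v \<Rightarrow> bool)) \<Rightarrow> 'v set \<Rightarrow> bool" where
  "negative_circular g W \<longleftrightarrow> graph_is_full_cycle g W \<and>
     odd (card {(j, i). neg_arc g W j i})"

end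

theory Submission
  imports Defs
begin

definition uniq :: "(('v \<Rightarrow> bool) \<Rightarrow> ('v \<Rightarrow> bool)) \<Rightarrow> 'v set \<Rightarrow> ('v \<Rightarrow> bool) \<Rightarrow> bool" where
  "uniq g I z \<longleftrightarrow> (\<exists>!y. y \<in> confs I \<and> subnet g I z y = y)"

definition restr :: "'v set \<Rightarrow> ('v \<Rightarrow> bool) \<Rightarrow> ('v \<Rightarrow> bool)" where
  "restr J y = (\<lambda>v. v \<in> J \<and> y v)"

definition negout :: "(('v \<Rightarrow> bool) \<Rightarrow> ('v \<Rightarrow> bool)) \<Rightarrow> 'v \<Rightarrow> (('v \<Rightarrow> bool) \<Rightarrow> ('v \<Rightarrow> bool))" where
  "negout g i = (\<lambda>x. (g x)(i := \<not> g x i))"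

lemma uniq_eq: "uniq g I z \<Longrightarrow> a \<in> confs I \<Longrightarrow> subnet g I z a = a \<Longrightarrow> b \<in> confs I \<Longrightarrow> subnet g I z b = b \<Longrightarrow> a = b"
  unfolding uniq_def by blast

lemma nonuniqI: "a \<in> confs I \<Longrightarrow> subnet g I z a = a \<Longrightarrow> b \<in> confs I \<Longrightarrow> subnet g I z b = b \<Longrightarrow> a \<noteq> b \<Longrightarrow> \<not> uniq g I z"
  using uniq_eq by blast

lemma subnet_confs: "subnet g I z y \<in> confs I"
  by (simp add: subnet_def confs_def)

lemma subnet_out: "v \<notin> I \<Longrightarrow> subnet g I z y v = False"
  by (simp add: subnet_def)

lemma confs_out: "y \<in> confs I \<Longrightarrow> v \<notin> I \<Longrightarrow> y v = False"
  by (simp add: confs_def)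

lemma confs_eqI: "x \<in> confs I \<Longrightarrow> y \<in> confs I \<Longrightarrow> (\<And>v. v \<in> I \<Longrightarrow> x v = y v) \<Longrightarrow> x = y"
  by (rule ext) (metis confs_out)

lemma ne_subnet:
  fixes g :: "('v::finite \<Rightarrow> bool) \<Rightarrow> ('v \<Rightarrow> bool)"
  assumes "non_expansive g"
  shows "hamming (subnet g I z x) (subnet g I z y) \<le> hamming x y"
proof -
  let ?X = "\<lambda>u. if u \<in> I then x u else z u"
  let ?Y = "\<lambda>u. if u \<in> I then y u else z u"
  have "hamming (subnet g I z x) (subnet g I z y) \<le> hamming (g ?X) (g ?Y)"
    unfolding hamming_def by (rule card_mono) (auto simp: subnet_def)
  also have "\<dots> \<le> hamming ?X ?Y" using assms by (simp add: non_expansive_def)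
  also have "\<dots> \<le> hamming x y"
    unfolding hamming_def by (rule card_mono) auto
  finally show ?thesis .
qed

lemma ne_negout:
  fixes g :: "('v::finite \<Rightarrow> bool) \<Rightarrow> ('v \<Rightarrow> bool)"
  assumes "non_expansive g" shows "non_expansive (negout g i)"
proof -
  have "\<And>x y. {v. negout g i x v \<noteq> negout g i y v} = {v. g x v \<noteq> g y v}"
    by (auto simp: negout_def)
  then show ?thesis using assms by (simp add: non_expansive_def hamming_def)
qed

lemma subnet_negout_val:
  "k \<in> K \<Longrightarrow> subnet (negout g i) K z y k = (if k = i then \<not> subnet g K z y k else subnet g K z y k)"
  by (cases "k = i") (auto simp: subnet_def negout_def)

lemma arcs_negout:
  assumes "k \<in> K"
  shows "pos_arc (subnet (negout g i) K z) K j k = (if k = i then neg_arc (subnet g K z) K j k else pos_arc (subnet g K z) K j k)"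
    and "neg_arc (subnet (negout g i) K z) K j k = (if k = i then pos_arc (subnet g K z) K j k else neg_arc (subnet g K z) K j k)"
  using assms by (auto simp: pos_arc_def neg_arc_def subnet_negout_val)

lemma full_cycle_negout:
  assumes "graph_is_full_cycle (subnet (negout g i) K z) K"
  shows "graph_is_full_cycle (subnet g K z) K"
proof -
  have A: "(pos_arc (subnet (negout g i) K z) K j k \<or> neg_arc (subnet (negout g i) K z) K j k)
     = (pos_arc (subnet g K z) K j k \<or> neg_arc (subnet g K z) K j k)" for j k
  proof (cases "k \<in> K")
    case True then show ?thesis by (auto simp: arcs_negout)
  next
    case False then show ?thesis by (simp add: pos_arc_def neg_arc_def)
  qed
  have B: "(pos_arc (subnet (negout g i) K z) K j k \<and> neg_arc (subnet (negout g i) K z) K j k)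
     = (pos_arc (subnet g K z) K j k \<and> neg_arc (subnet g K z) K j k)" for j k
  proof (cases "k \<in> K")
    case True then show ?thesis by (auto simp: arcs_negout)
  next
    case False then show ?thesis by (simp add: pos_arc_def neg_arc_def)
  qed
  show ?thesis using assms unfolding graph_is_full_cycle_def A B by simp
qed

lemma restr_fixed:
  assumes "J \<subseteq> I" "\<And>v. v \<in> J \<Longrightarrow> subnet g I z y v = y v"
    "\<And>u. u \<notin> J \<Longrightarrow> z' u = (if u \<in> I then y u else z u)"
  shows "subnet g J z' (restr J y) = restr J y"
proof (rule ext)
  fix v
  have eq: "(\<lambda>u. if u \<in> J then restr J y u else z' u) = (\<lambda>u. if u \<in> I then y u else z u)"
    using assms(1,3) by (auto simp: restr_def)
  have "subnet g J z' (restr J y) v = (if v \<in> J then g (\<lambda>u. if u \<in> I then y u else z u) v else False)"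
    unfolding subnet_def eq ..
  moreover have "v \<in> J \<Longrightarrow> subnet g I z y v = g (\<lambda>u. if u \<in> I then y u else z u) v"
    using assms(1) unfolding subnet_def by auto
  ultimately show "subnet g J z' (restr J y) v = restr J y v"
    using assms(2)[of v] unfolding restr_def by (cases "v \<in> J") simp_all
qed

lemma restr_confs: "restr J y \<in> confs J" by (simp add: restr_def confs_def)

lemma flip_eq:
  assumes "k \<in> I" "i \<in> I" "\<not> pos_arc G I k i" "\<not> neg_arc G I k i" "x \<in> confs I"
  shows "G (x(k := b)) i = G (x(k := c)) i"
proof -
  have "G (x(k := True)) i = G (x(k := False)) i"
    using assms unfolding pos_arc_def neg_arc_def by blast
  then show ?thesis by (cases b; cases c) simp_all
qed

lemma indep_arc:
  fixes G :: "('v::finite \<Rightarrow> bool) \<Rightarrow> ('v \<Rightarrow> bool)"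
  assumes noarc: "\<forall>k. k \<noteq> j \<longrightarrow> \<not> pos_arc G I k i \<and> \<not> neg_arc G I k i" and i: "i \<in> I"
  shows "x \<in> confs I \<Longrightarrow> x' \<in> confs I \<Longrightarrow> x j = x' j \<Longrightarrow> G x i = G x' i"
proof (induction "card {v. x v \<noteq> x' v}" arbitrary: x rule: less_induct)
  case less
  show ?case
  proof (cases "x = x'")
    case True then show ?thesis by simp
  next
    case False
    then obtain k where k: "x k \<noteq> x' k" by auto
    then have kI: "k \<in> I" using less.prems confs_out by metis
    have kj: "k \<noteq> j" using k less.prems by auto
    let ?x = "x(k := x' k)"
    have "{v. ?x v \<noteq> x' v} \<subset> {v. x v \<noteq> x' v}" using k by auto
    then have "card {v. ?x v \<noteq> x' v} < card {v. x v \<noteq> x' v}" by (simp add: psubset_card_mono)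
    moreover have "?x \<in> confs I" using less.prems kI by (auto simp: confs_def)
    moreover have "?x j = x' j" using less.prems kj by simp
    ultimately have "G ?x i = G x' i" using less.hyps less.prems by blast
    moreover have "G x i = G ?x i"
      using flip_eq[OF kI i _ _ less.prems(1), of G "x k" "x' k"] noarc kj by simp
    ultimately show ?thesis by simp
  qed
qed

lemma mod_suc_inj: assumes "k < n" "k' < n" "Suc k mod n = Suc k' mod n" shows "k = k'"
  proof (cases "Suc k = n")
  case True
  show ?thesis
  proof (cases "Suc k' = n")
    case True then show ?thesis using \<open>Suc k = n\<close> by simp
  next
    case False then have "Suc k' < n" using \<open>k' < n\<close> by simp
    then show ?thesis using True \<open>Suc k mod n = Suc k' mod n\<close> by simp
  qed
next
  case False then have "Suc k < n" using \<open>k < n\<close> by simp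
  show ?thesis
  proof (cases "Suc k' = n")
    case True then show ?thesis using \<open>Suc k < n\<close> \<open>Suc k mod n = Suc k' mod n\<close> by simp
  next
    case False then have "Suc k' < n" using \<open>k' < n\<close> by simp
    then show ?thesis using \<open>Suc k < n\<close> \<open>Suc k mod n = Suc k' mod n\<close> by simp
  qed
qed

lemma full_cycle_pred:
  assumes "graph_is_full_cycle G I" "i \<in> I"
  shows "\<exists>j. (pos_arc G I j i \<or> neg_arc G I j i) \<and> (\<forall>j'. (pos_arc G I j' i \<or> neg_arc G I j' i) \<longrightarrow> j' = j)"
proof -
  obtain vs where d: "distinct vs" and s: "set vs = I" and
    arc: "\<And>j i. (pos_arc G I j i \<or> neg_arc G I j i) \<longleftrightarrow>
           (\<exists>k < length vs. j = vs ! k \<and> i = vs ! (Suc k mod length vs))"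
    using assms(1) unfolding graph_is_full_cycle_def by blast
  let ?n = "length vs"
  obtain m where m: "m < ?n" "i = vs ! m" using assms(2) s by (metis in_set_conv_nth)
  define k where "k = (m + ?n - 1) mod ?n"
  have kn: "k < ?n" using m unfolding k_def by (intro mod_less_divisor) auto
  have "Suc k mod ?n = m"
  proof (cases m)
    case 0 then show ?thesis using m by (simp add: k_def)
  next
    case (Suc m') then show ?thesis using m by (simp add: k_def)
  qed
  then have a: "pos_arc G I (vs ! k) i \<or> neg_arc G I (vs ! k) i" using arc kn m by auto
  have "j' = vs ! k" if hj: "pos_arc G I j' i \<or> neg_arc G I j' i" for j'
  proof -
    obtain k' where k': "k' < ?n" "j' = vs ! k'" "i = vs ! (Suc k' mod ?n)" using hj arc by blast
    have "Suc k' mod ?n < ?n" using k'(1) by (intro mod_less_divisor) auto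
    then have "Suc k' mod ?n = m" using k'(3) m d nth_eq_iff_index_eq by metis
    then have "k' = k" using mod_suc_inj[OF k'(1) kn] \<open>Suc k mod ?n = m\<close> by simp
    then show ?thesis using k' by simp
  qed
  then show ?thesis using a by blast
qed

lemma circ_nonuniq:
  fixes g :: "('v::finite \<Rightarrow> bool) \<Rightarrow> ('v \<Rightarrow> bool)"
  assumes cyc: "graph_is_full_cycle (subnet g I z) I" and ne: "I \<noteq> {}"
  shows "\<not> uniq g I z"
proof
  let ?F = "subnet g I z"
  assume "uniq g I z"
  then obtain y where y: "y \<in> confs I" "?F y = y" unfolding uniq_def by blast
  let ?y = "\<lambda>v. v \<in> I \<and> \<not> y v"
  have yc: "?y \<in> confs I" by (simp add: confs_def)
  have key: "?F ?y i = ?y i" if i: "i \<in> I" for i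
  proof -
    obtain j where j: "pos_arc ?F I j i \<or> neg_arc ?F I j i"
      and uj: "\<forall>j'. (pos_arc ?F I j' i \<or> neg_arc ?F I j' i) \<longrightarrow> j' = j"
      using full_cycle_pred[OF cyc i] by blast
    have jI: "j \<in> I" using j by (auto simp: pos_arc_def neg_arc_def)
    have noarc: "\<forall>k. k \<noteq> j \<longrightarrow> \<not> pos_arc ?F I k i \<and> \<not> neg_arc ?F I k i" using uj by blast
    have dep: "?F x i = ?F x' i" if "x \<in> confs I" "x' \<in> confs I" "x j = x' j" for x x'
      using indep_arc[OF noarc i that] .
    let ?T = "\<lambda>v. v = j" and ?E = "\<lambda>v::'v. False"
    have Tc: "?T \<in> confs I" using jI by (auto simp: confs_def)
    have Ec: "?E \<in> confs I" by (simp add: confs_def)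
    have form: "?F x i = (if x j then ?F ?T i else ?F ?E i)" if "x \<in> confs I" for x
      using dep[OF that Tc] dep[OF that Ec] by auto
    have diff: "?F ?T i \<noteq> ?F ?E i"
    proof
      assume eq: "?F ?T i = ?F ?E i"
      have "?F x i = ?F ?E i" if "x \<in> confs I" for x using form[OF that] eq by simp
      moreover have "x(j := b) \<in> confs I" if "x \<in> confs I" for x b
        using that jI by (auto simp: confs_def)
      ultimately show False using j unfolding pos_arc_def neg_arc_def by metis
    qed
    have "?F ?y i = (if ?y j then ?F ?T i else ?F ?E i)" using form[OF yc] .
    also have "\<dots> = (\<not> (if y j then ?F ?T i else ?F ?E i))" using diff jI by auto
    also have "\<dots> = (\<not> ?F y i)" using form[OF y(1)] by simp
    also have "\<dots> = ?y i" using y(2) i by simp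
    finally show ?thesis .
  qed
  have Fy: "?F ?y = ?y" by (rule confs_eqI[OF subnet_confs yc]) (rule key)
  moreover obtain i where "i \<in> I" using ne by blast
  then have "?y \<noteq> y"
  proof (intro notI)
    assume "i \<in> I" "?y = y"
    from \<open>?y = y\<close> have "?y i = y i" by (rule arg_cong[where f="\<lambda>h. h i"])
    then show False using \<open>i \<in> I\<close> by (cases "y i") auto
  qed
  moreover have "y = ?y" using uniq_eq[OF \<open>uniq g I z\<close> y yc Fy] .
  ultimately show False by simp
qed

lemma cycle_list:
  fixes \<sigma> :: "'v \<Rightarrow> 'v"
  assumes fin: "finite I" and ne: "I \<noteq> {}" and inj: "inj_on \<sigma> I" and into: "\<sigma> ` I \<subseteq> I"
    and closed: "\<And>S. S \<noteq> {} \<Longrightarrow> S \<subseteq> I \<Longrightarrow> \<sigma> ` S \<subseteq> S \<Longrightarrow> S = I"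
  shows "\<exists>vs. distinct vs \<and> set vs = I \<and> (\<forall>j i. (j \<in> I \<and> i = \<sigma> j) \<longleftrightarrow> (\<exists>k < length vs. j = vs ! k \<and> i = vs ! (Suc k mod length vs)))"
proof -
  obtain j0 where j0: "j0 \<in> I" using ne by blast
  define n where "n = card I"
  have n0: "n > 0" using fin ne by (simp add: n_def card_gt_0_iff)
  define vs where "vs = map (\<lambda>k. (\<sigma> ^^ k) j0) [0..<n]"
  have inI: "(\<sigma> ^^ k) j0 \<in> I" for k by (induction k) (use j0 into in auto)
  have neq: "(\<sigma> ^^ a) j0 \<noteq> (\<sigma> ^^ b) j0" if ab: "a < b" "b < n" for a b
  proof
    assume eq: "(\<sigma> ^^ a) j0 = (\<sigma> ^^ b) j0"
    define S where "S = (\<lambda>k. (\<sigma> ^^ k) j0) ` {..<b}"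
    have "\<sigma> ` S \<subseteq> S"
    proof
      fix x assume "x \<in> \<sigma> ` S"
      then obtain k where k: "k < b" "x = \<sigma> ((\<sigma> ^^ k) j0)" by (auto simp: S_def)
      then have x: "x = (\<sigma> ^^ Suc k) j0" by simp
      show "x \<in> S"
      proof (cases "Suc k < b")
        case True then show ?thesis using x unfolding S_def by (intro image_eqI[where x="Suc k"]) auto
      next
        case False then have "Suc k = b" using k by simp
        then have "x = (\<sigma> ^^ a) j0" using x eq by simp
        then show ?thesis using ab(1) by (auto simp: S_def)
      qed
    qed
    moreover have "S \<noteq> {}" using ab(1) by (auto simp: S_def)
    moreover have "S \<subseteq> I" using inI by (auto simp: S_def)
    ultimately have "S = I" using closed by blast
    moreover have "card S \<le> b" unfolding S_def by (metis card_image_le card_lessThan finite_lessThan)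
    ultimately show False using ab(2) n_def by simp
  qed
  have injk: "inj_on (\<lambda>k. (\<sigma> ^^ k) j0) {0..<n}"
    unfolding inj_on_def
  proof (intro ballI impI)
    fix a b assume a: "a \<in> {0..<n}" and b: "b \<in> {0..<n}" and e: "(\<sigma> ^^ a) j0 = (\<sigma> ^^ b) j0"
    show "a = b"
    proof (rule ccontr)
      assume "a \<noteq> b"
      then consider "a < b" | "b < a" by linarith
      then show False
      proof cases
        case 1 then show False using neq[of a b] a b e by simp
      next
        case 2 then show False using neq[of b a] a b e by simp
      qed
    qed
  qed
  have dist: "distinct vs" unfolding vs_def distinct_map using injk by simp
  have len: "length vs = n" by (simp add: vs_def)
  have nth: "k < n \<Longrightarrow> vs ! k = (\<sigma> ^^ k) j0" for k by (simp add: vs_def)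
  have sub: "set vs \<subseteq> I" using inI by (auto simp: vs_def)
  have setvs: "set vs = I"
    using card_subset_eq[OF fin sub] distinct_card[OF dist] len n_def by simp
  have cyc: "(\<sigma> ^^ n) j0 = j0"
  proof -
    have "(\<sigma> ^^ n) j0 \<in> set vs" using setvs inI by simp
    then obtain a where a: "a < n" "(\<sigma> ^^ n) j0 = (\<sigma> ^^ a) j0"
      using nth len by (metis in_set_conv_nth)
    show ?thesis
    proof (cases a)
      case 0 then show ?thesis using a by simp
    next
      case (Suc a')
      obtain m where m: "n = Suc m" using n0 by (cases n) auto
      have "\<sigma> ((\<sigma> ^^ m) j0) = \<sigma> ((\<sigma> ^^ a') j0)" using a Suc m by simp
      then have "(\<sigma> ^^ m) j0 = (\<sigma> ^^ a') j0" using inj inI by (meson inj_onD)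
      moreover have "a' < m" using a Suc m by simp
      ultimately show ?thesis using neq[of a' m] m by simp
    qed
  qed
  have nxt: "vs ! (Suc k mod n) = \<sigma> (vs ! k)" if k: "k < n" for k
  proof (cases "Suc k < n")
    case True then show ?thesis using k nth by simp
  next
    case False then have "Suc k = n" using k by simp
    then have "vs ! (Suc k mod n) = j0" using nth n0 by simp
    also have "\<dots> = (\<sigma> ^^ Suc k) j0" using cyc \<open>Suc k = n\<close> by simp
    also have "\<dots> = \<sigma> (vs ! k)" using nth k by simp
    finally show ?thesis .
  qed
  have "(j \<in> I \<and> i = \<sigma> j) \<longleftrightarrow> (\<exists>k < length vs. j = vs ! k \<and> i = vs ! (Suc k mod length vs))" for j i
  proof
    assume h: "j \<in> I \<and> i = \<sigma> j"
    then obtain k where "k < n" "vs ! k = j" using setvs len by (metis in_set_conv_nth)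
    then show "\<exists>k < length vs. j = vs ! k \<and> i = vs ! (Suc k mod length vs)" using h nxt len by auto
  next
    assume "\<exists>k < length vs. j = vs ! k \<and> i = vs ! (Suc k mod length vs)"
    then obtain k where "k < n" "j = vs ! k" "i = vs ! (Suc k mod n)" using len by auto
    then show "j \<in> I \<and> i = \<sigma> j" using nxt setvs len by (metis nth_mem)
  qed
  then show ?thesis using dist setvs by blast
qed

lemma twofp:
  fixes g :: "('v::finite \<Rightarrow> bool) \<Rightarrow> ('v \<Rightarrow> bool)"
  assumes ne: "non_expansive g" and Ine: "I \<noteq> {}"
    and min: "\<And>J z'. J \<noteq> {} \<Longrightarrow> J \<subset> I \<Longrightarrow> uniq g J z'"
    and p: "p \<in> confs I" "subnet g I z p = p"
    and q: "q \<in> confs I" "subnet g I z q = q" and pq: "p \<noteq> q"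
  shows "graph_is_full_cycle (subnet g I z) I"
proof -
  define F where "F = subnet g I z"
  have Fc: "F y \<in> confs I" for y by (simp add: F_def subnet_confs)
  have Fne: "hamming (F x) (F y) \<le> hamming x y" for x y unfolding F_def by (rule ne_subnet[OF ne])
  have Fp: "F p = p" and Fq: "F q = q" using p q by (simp_all add: F_def)
  have fin: "finite A" for A :: "'v set" by simp
  have opp: "q k = (\<not> p k)" if k: "k \<in> I" for k
  proof (rule ccontr)
    assume "q k \<noteq> (\<not> p k)"
    then have pk: "q k = p k" by auto
    show False
    proof (cases "I - {k} = {}")
      case True
      then have "p = q" using confs_eqI[OF p(1) q(1)] pk by auto
      then show False using pq by simp
    next
      case False
      define J where "J = I - {k}"
      define z' where "z' = (\<lambda>u. if u \<in> I then p u else z u)"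
      have JI: "J \<subseteq> I" by (auto simp: J_def)
      have 1: "subnet g J z' (restr J p) = restr J p"
        by (rule restr_fixed[OF JI]) (use p(2) in \<open>auto simp: z'_def\<close>)
      have 2: "subnet g J z' (restr J q) = restr J q"
        by (rule restr_fixed[OF JI, where z=z]) (use q(2) pk in \<open>auto simp: z'_def J_def\<close>)
      have "J \<subset> I" using k by (auto simp: J_def)
      moreover have "J \<noteq> {}" using False by (simp add: J_def)
      ultimately have "uniq g J z'" using min by blast
      then have e: "restr J p = restr J q" using uniq_eq restr_confs 1 2 by metis
      have "p = q"
      proof (rule confs_eqI[OF p(1) q(1)])
        fix v assume v: "v \<in> I"
        show "p v = q v"
        proof (cases "v = k")
          case True then show ?thesis using pk by simp
        next
          case False
          then have "restr J p v = restr J q v" using e by simp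
          then show ?thesis using v False by (simp add: restr_def J_def)
        qed
      qed
      then show False using pq by simp
    qed
  qed
  define D where "D y = {v. y v \<noteq> p v}" for y
  define c where "c S = (\<lambda>v. if v \<in> S then \<not> p v else p v)" for S
  have Dsub: "D y \<subseteq> I" if "y \<in> confs I" for y
    using that p(1) by (auto simp: D_def confs_def)
  have hamp: "hamming y p = card (D y)" for y by (simp add: hamming_def D_def)
  have hamq: "hamming y q = card I - card (D y)" if y: "y \<in> confs I" for y
  proof -
    have "{v. y v \<noteq> q v} = I - D y"
      using y p(1) q(1) opp by (auto simp: D_def confs_def)
    then show ?thesis using Dsub[OF y] by (simp add: hamming_def card_Diff_subset)
  qed
  have cardI: "card (D y) \<le> card I" if "y \<in> confs I" for y using Dsub[OF that] by (simp add: card_mono)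
  have Dcard: "card (D (F y)) = card (D y)" if y: "y \<in> confs I" for y
  proof -
    have "hamming (F y) (F p) \<le> hamming y p" by (rule Fne)
    then have a: "card (D (F y)) \<le> card (D y)" using Fp hamp by simp
    have "hamming (F y) (F q) \<le> hamming y q" by (rule Fne)
    then have "card I - card (D (F y)) \<le> card I - card (D y)" using Fq hamq[OF y] hamq[OF Fc] by simp
    then show ?thesis using a cardI[OF y] cardI[OF Fc[of y]] by linarith
  qed
  have Dmono: "D (F y) \<subseteq> D (F y')" if y: "y \<in> confs I" "y' \<in> confs I" and s: "D y \<subseteq> D y'" for y y'
  proof -
    let ?A = "D (F y)" and ?B = "D (F y')"
    have "{v. y v \<noteq> y' v} = D y' - D y" using s by (auto simp: D_def)
    then have h1: "hamming y y' = card (D y') - card (D y)" using s by (simp add: hamming_def card_Diff_subset)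
    have "{v. F y v \<noteq> F y' v} = (?A - ?B) \<union> (?B - ?A)" by (auto simp: D_def)
    then have h2: "hamming (F y) (F y') = card (?A - ?B) + card (?B - ?A)"
      by (simp add: hamming_def card_Un_disjoint Int_Diff_disjoint Diff_Int_distrib) (subst card_Un_disjoint; auto)
    have cA: "card ?A = card (?A \<inter> ?B) + card (?A - ?B)" by (rule card_Int_Diff) simp
    have cB: "card ?B = card (?B \<inter> ?A) + card (?B - ?A)" by (rule card_Int_Diff) simp
    have "?B \<inter> ?A = ?A \<inter> ?B" by blast
    moreover have "card (?A - ?B) + card (?B - ?A) \<le> card (D y') - card (D y)" using Fne[of y y'] h1 h2 by simp
    ultimately have "card (?A - ?B) = 0" using cA cB Dcard[OF y(1)] Dcard[OF y(2)] by arith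
    then have "?A - ?B = {}" by simp
    then show ?thesis by blast
  qed
  have cc: "c S \<in> confs I" if "S \<subseteq> I" for S using that p(1) by (auto simp: c_def confs_def)
  have Dc: "D (c S) = S" for S by (auto simp: c_def D_def)
  have cD: "c (D y) = y" for y by (auto simp: c_def D_def)
  define Phi where "Phi S = D (F (c S))" for S
  have Phi_sub: "Phi S \<subseteq> I" for S unfolding Phi_def by (rule Dsub[OF Fc])
  have Phi_card: "card (Phi S) = card S" if "S \<subseteq> I" for S
    unfolding Phi_def using Dcard[OF cc[OF that]] Dc by simp
  have Phi_mono: "Phi S \<subseteq> Phi T" if "S \<subseteq> T" "T \<subseteq> I" for S T
    unfolding Phi_def using that by (intro Dmono cc) (auto simp: Dc)
  have noinv: False if S: "S \<noteq> {}" "S \<subset> I" "Phi S = S" for S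
  proof -
    define z' where "z' = (\<lambda>u. if u \<in> I then p u else z u)"
    have SI: "S \<subseteq> I" using S by auto
    have 1: "subnet g S z' (restr S p) = restr S p"
      by (rule restr_fixed[OF SI]) (use p(2) in \<open>auto simp: z'_def\<close>)
    have fx: "subnet g I z (c S) v = c S v" if v: "v \<in> S" for v
    proof -
      have "v \<in> D (F (c S))" using v S(3) by (simp add: Phi_def)
      then show ?thesis using v by (auto simp: D_def c_def F_def)
    qed
    have 2: "subnet g S z' (restr S (c S)) = restr S (c S)"
      by (rule restr_fixed[OF SI fx]) (auto simp: z'_def c_def)
    have "uniq g S z'" using min S by auto
    then have e: "restr S p = restr S (c S)" using uniq_eq restr_confs 1 2 by metis
    obtain v where v: "v \<in> S" using S by blast
    have "restr S p v = restr S (c S) v" using e by simp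
    then show False using v by (simp add: restr_def c_def)
  qed
  define \<sigma> where "\<sigma> j = the_elem (Phi {j})" for j
  have sig: "Phi {j} = {\<sigma> j}" if "j \<in> I" for j
  proof -
    have "card (Phi {j}) = 1" using Phi_card[of "{j}"] that by simp
    then obtain m where "Phi {j} = {m}" by (rule card_1_singletonE)
    then show ?thesis by (simp add: \<sigma>_def)
  qed
  have sigI: "\<sigma> j \<in> I" if "j \<in> I" for j using sig[OF that] Phi_sub by blast
  have sigPhi: "\<sigma> ` S \<subseteq> Phi S" if "S \<subseteq> I" for S
  proof
    fix x assume "x \<in> \<sigma> ` S"
    then obtain s where s: "s \<in> S" "x = \<sigma> s" by blast
    have "Phi {s} \<subseteq> Phi S" using s that by (intro Phi_mono) auto
    then show "x \<in> Phi S" using sig[of s] s that by auto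
  qed
  obtain C where C: "C \<noteq> {} \<and> C \<subseteq> I \<and> \<sigma> ` C \<subseteq> C"
      and Cmin: "\<And>C'. C' \<noteq> {} \<and> C' \<subseteq> I \<and> \<sigma> ` C' \<subseteq> C' \<Longrightarrow> card C \<le> card C'"
    using ex_has_least_nat[of "\<lambda>C. C \<noteq> {} \<and> C \<subseteq> I \<and> \<sigma> ` C \<subseteq> C" I card] Ine sigI by blast
  have sC: "\<sigma> ` C = C"
  proof -
    have "\<sigma> ` C \<noteq> {} \<and> \<sigma> ` C \<subseteq> I \<and> \<sigma> ` (\<sigma> ` C) \<subseteq> \<sigma> ` C" using C by blast
    then have "card C \<le> card (\<sigma> ` C)" by (rule Cmin)
    moreover have "card (\<sigma> ` C) \<le> card C" by (rule card_image_le) simp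
    ultimately have "card (\<sigma> ` C) = card C" by simp
    moreover have "\<sigma> ` C \<subseteq> C" using C by blast
    ultimately show ?thesis using card_subset_eq[OF fin] by blast
  qed
  have injC: "inj_on \<sigma> C" using sC by (simp add: eq_card_imp_inj_on)
  have "Phi C = C"
  proof -
    have "C \<subseteq> Phi C" using sigPhi[of C] C sC by simp
    moreover have "card C = card (Phi C)" using Phi_card[of C] C by simp
    ultimately show ?thesis using card_subset_eq[OF fin] by metis
  qed
  then have CI: "C = I" using noinv[of C] C by blast
  have inj: "inj_on \<sigma> I" using injC CI by simp
  have into: "\<sigma> ` I \<subseteq> I" using sigI by blast
  have PhiS: "Phi S = \<sigma> ` S" if "S \<subseteq> I" for S
  proof -
    have "card (\<sigma> ` S) = card S" using card_image inj_on_subset[OF inj that] by blast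
    then show ?thesis using card_subset_eq[OF fin sigPhi[OF that]] Phi_card[OF that] by simp
  qed
  have closed: "S = I" if S: "S \<noteq> {}" "S \<subseteq> I" "\<sigma> ` S \<subseteq> S" for S
  proof (rule ccontr)
    assume "S \<noteq> I"
    have "card (\<sigma> ` S) = card S" using card_image inj_on_subset[OF inj S(2)] by blast
    then have "\<sigma> ` S = S" using card_subset_eq[OF fin S(3)] by simp
    then show False using noinv[of S] S \<open>S \<noteq> I\<close> PhiS by auto
  qed
  have sI: "\<sigma> ` I = I" using sC CI by simp
  define \<pi> where "\<pi> i = the_inv_into I \<sigma> i" for i
  have piI: "\<pi> i \<in> I" if "i \<in> I" for i using the_inv_into_into[OF inj] that sI by (simp add: \<pi>_def)
  have spi: "\<sigma> (\<pi> i) = i" if "i \<in> I" for i using f_the_inv_into_f[OF inj] that sI by (simp add: \<pi>_def)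
  have pis: "\<pi> (\<sigma> j) = j" if "j \<in> I" for j using the_inv_into_f_f[OF inj that] by (simp add: \<pi>_def)
  have form: "F y i = (if y (\<pi> i) \<noteq> p (\<pi> i) then \<not> p i else p i)" if y: "y \<in> confs I" and i: "i \<in> I" for y i
  proof -
    have "D (F y) = \<sigma> ` (D y)" using PhiS[OF Dsub[OF y]] cD[of y] by (simp add: Phi_def)
    then have "(F y i \<noteq> p i) = (i \<in> \<sigma> ` D y)" by (auto simp: D_def)
    also have "\<dots> = (\<pi> i \<in> D y)"
    proof
      assume "i \<in> \<sigma> ` D y"
      then obtain j where j: "j \<in> D y" "i = \<sigma> j" by blast
      then have "j \<in> I" using Dsub[OF y] by blast
      then show "\<pi> i \<in> D y" using j pis by simp
    next
      assume "\<pi> i \<in> D y"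
      then show "i \<in> \<sigma> ` D y" by (rule image_eqI[rotated]) (simp add: spi[OF i])
    qed
    finally show ?thesis by (auto simp: D_def)
  qed
  have updc: "x(j := b) \<in> confs I" if "x \<in> confs I" "j \<in> I" for x j b
    using that by (auto simp: confs_def)
  have E: "(\<lambda>_. False) \<in> confs I" by (simp add: confs_def)
  have pos: "pos_arc F I j i \<longleftrightarrow> j \<in> I \<and> i \<in> I \<and> j = \<pi> i \<and> p j = p i" for j i
  proof (cases "j \<in> I \<and> i \<in> I")
    case True
    then have jI: "j \<in> I" and iI: "i \<in> I" by auto
    have val: "F (x(j := b)) i = (if j = \<pi> i then (if b \<noteq> p j then \<not> p i else p i) else F x i)"
      if "x \<in> confs I" for x b
      using form[OF updc[OF that jI] iI] form[OF that iI] by auto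
    show ?thesis using True unfolding pos_arc_def using val E by (cases "p j"; cases "p i"; auto)
  qed (auto simp: pos_arc_def)
  have neg: "neg_arc F I j i \<longleftrightarrow> j \<in> I \<and> i \<in> I \<and> j = \<pi> i \<and> p j \<noteq> p i" for j i
  proof (cases "j \<in> I \<and> i \<in> I")
    case True
    then have jI: "j \<in> I" and iI: "i \<in> I" by auto
    have val: "F (x(j := b)) i = (if j = \<pi> i then (if b \<noteq> p j then \<not> p i else p i) else F x i)"
      if "x \<in> confs I" for x b
      using form[OF updc[OF that jI] iI] form[OF that iI] by auto
    show ?thesis using True unfolding neg_arc_def using val E by (cases "p j"; cases "p i"; auto)
  qed (auto simp: neg_arc_def)
  have arcs: "(pos_arc F I j i \<or> neg_arc F I j i) \<longleftrightarrow> (j \<in> I \<and> i = \<sigma> j)" for j i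
    unfolding pos neg using spi piI pis sigI by auto
  obtain vs where vs: "distinct vs" "set vs = I"
    "\<forall>j i. (j \<in> I \<and> i = \<sigma> j) \<longleftrightarrow> (\<exists>k < length vs. j = vs ! k \<and> i = vs ! (Suc k mod length vs))"
    using cycle_list[OF fin Ine inj into closed] by blast
  have "graph_is_full_cycle F I"
    unfolding graph_is_full_cycle_def
  proof (intro conjI exI[of _ vs] allI)
    show "\<not> (pos_arc F I j i \<and> neg_arc F I j i)" for j i unfolding pos neg by auto
    show "distinct vs" "set vs = I" using vs by auto
    show "(pos_arc F I j i \<or> neg_arc F I j i) \<longleftrightarrow> (\<exists>k < length vs. j = vs ! k \<and> i = vs ! (Suc k mod length vs))" for j i
      using arcs vs(3) by blast
  qed
  then show ?thesis by (simp add: F_def)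
qed

lemma offfix:
  assumes min: "\<And>J z'. J \<noteq> {} \<Longrightarrow> J \<subset> I \<Longrightarrow> uniq g J z'" and i: "i \<in> I"
  shows "\<exists>y \<in> confs I. y i = a \<and> (\<forall>v \<in> I - {i}. subnet g I z y v = y v)"
proof (cases "I - {i} = {}")
  case True
  define y where "y = (\<lambda>v. v = i \<and> a)"
  have "y \<in> confs I" using i by (auto simp: confs_def y_def)
  moreover have "y i = a" by (simp add: y_def)
  moreover have "\<forall>v \<in> I - {i}. subnet g I z y v = y v" unfolding True by simp
  ultimately show ?thesis by (intro bexI[of _ y]) auto
next
  case False
  define J where "J = I - {i}"
  define z' where "z' = z(i := a)"
  have "J \<subset> I" using i by (auto simp: J_def)
  moreover have "J \<noteq> {}" using False by (simp add: J_def)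
  ultimately have "uniq g J z'" using min by blast
  then obtain w where w: "w \<in> confs J" "subnet g J z' w = w" unfolding uniq_def by blast
  define y where "y = (\<lambda>v. if v = i then a else w v)"
  have yc: "y \<in> confs I" using w(1) i by (auto simp: y_def confs_def J_def)
  have "subnet g I z y v = y v" if v: "v \<in> I - {i}" for v
  proof -
    have eq: "(\<lambda>u. if u \<in> I then y u else z u) = (\<lambda>u. if u \<in> J then w u else z' u)"
      using i by (auto simp: y_def z'_def J_def)
    have "subnet g I z y v = g (\<lambda>u. if u \<in> I then y u else z u) v" using v by (simp add: subnet_def)
    also have "\<dots> = g (\<lambda>u. if u \<in> J then w u else z' u) v" by (simp only: eq)
    also have "\<dots> = subnet g J z' w v" using v by (simp add: subnet_def J_def)
    also have "\<dots> = w v" using w(2) by simp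
    finally show ?thesis using v by (simp add: y_def)
  qed
  moreover have "y i = a" by (simp add: y_def)
  ultimately show ?thesis using yc by (intro bexI[of _ y]) auto
qed

lemma main:
  fixes g :: "('v::finite \<Rightarrow> bool) \<Rightarrow> ('v \<Rightarrow> bool)"
  shows "non_expansive g \<Longrightarrow> I \<noteq> {} \<Longrightarrow> \<not> uniq g I z \<Longrightarrow> (\<And>J z'. J \<noteq> {} \<Longrightarrow> J \<subset> I \<Longrightarrow> uniq g J z')
    \<Longrightarrow> graph_is_full_cycle (subnet g I z) I"
proof (induction "card I" arbitrary: I g z rule: less_induct)
  case less
  note ne = less.prems(1) and Ine = less.prems(2) and nu = less.prems(3) and min = less.prems(4)
  show ?case
  proof (cases "\<exists>p. p \<in> confs I \<and> subnet g I z p = p")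
    case True
    then obtain p where p: "p \<in> confs I" "subnet g I z p = p" by blast
    then obtain q where q: "q \<in> confs I" "subnet g I z q = q" "p \<noteq> q"
      using nu unfolding uniq_def by blast
    show ?thesis by (rule twofp[OF ne Ine min p q])
  next
    case False
    obtain i where i: "i \<in> I" using Ine by blast
    define g' where "g' = negout g i"
    have ne': "non_expansive g'" unfolding g'_def by (rule ne_negout[OF ne])
    obtain y0 where y0: "y0 \<in> confs I" "y0 i = False" "\<forall>v \<in> I - {i}. subnet g I z y0 v = y0 v"
      using offfix[OF min i] by blast
    obtain y1 where y1: "y1 \<in> confs I" "y1 i = True" "\<forall>v \<in> I - {i}. subnet g I z y1 v = y1 v"
      using offfix[OF min i] by blast
    have fix': "subnet g' I z y = y" if y: "y \<in> confs I" "\<forall>v \<in> I - {i}. subnet g I z y v = y v" for y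
    proof -
      have "subnet g I z y i \<noteq> y i"
      proof
        assume "subnet g I z y i = y i"
        then have "subnet g I z y = y" using y by (intro confs_eqI[OF subnet_confs y(1)]) auto
        then show False using False y(1) by blast
      qed
      then show ?thesis using y unfolding g'_def
        by (intro confs_eqI[OF subnet_confs y(1)]) (auto simp: subnet_negout_val)
    qed
    have min': "uniq g' J z'" if J: "J \<noteq> {}" "J \<subset> I" for J z'
    proof (rule ccontr)
      assume nJ: "\<not> uniq g' J z'"
      obtain K where K: "K \<noteq> {} \<and> K \<subseteq> J \<and> (\<exists>zz. \<not> uniq g' K zz)"
        and Kmin: "\<And>K'. K' \<noteq> {} \<and> K' \<subseteq> J \<and> (\<exists>zz. \<not> uniq g' K' zz) \<Longrightarrow> card K \<le> card K'"
        using ex_has_least_nat[of "\<lambda>K. K \<noteq> {} \<and> K \<subseteq> J \<and> (\<exists>zz. \<not> uniq g' K zz)" J card] J nJ by blast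
      obtain zz where zz: "\<not> uniq g' K zz" using K by blast
      have Kmin': "uniq g' K' z''" if K': "K' \<noteq> {}" "K' \<subset> K" for K' z''
      proof (rule ccontr)
        assume "\<not> uniq g' K' z''"
        then have "card K \<le> card K'" using K K' by (intro Kmin) auto
        moreover have "card K' < card K" using K' by (simp add: psubset_card_mono)
        ultimately show False by simp
      qed
      have KI: "K \<subset> I" using K J by blast
      have cK: "card K < card I" using KI by (simp add: psubset_card_mono)
      have Kne: "K \<noteq> {}" using K by blast
      have "graph_is_full_cycle (subnet g' K zz) K" by (rule less.hyps[OF cK ne' Kne zz Kmin'])
      then have "graph_is_full_cycle (subnet g K zz) K" unfolding g'_def by (rule full_cycle_negout)
      then have "\<not> uniq g K zz" using K by (intro circ_nonuniq) auto
      moreover have "uniq g K zz" using min K KI by blast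
      ultimately show False by simp
    qed
    have p0: "subnet g' I z y0 = y0" using fix' y0 by blast
    have p1: "subnet g' I z y1 = y1" using fix' y1 by blast
    have yy: "y0 \<noteq> y1" using y0(2) y1(2) by auto
    have minR: "\<And>J z'. J \<noteq> {} \<Longrightarrow> J \<subset> I \<Longrightarrow> uniq g' J z'" by (rule min')
    have "graph_is_full_cycle (subnet g' I z) I"
      by (rule twofp[OF ne' Ine minR y0(1) p0 y1(1) p1 yy])
    then show ?thesis unfolding g'_def by (rule full_cycle_negout)
  qed
qed

theorem corollary6:
  fixes f :: "('v::finite \<Rightarrow> bool) \<Rightarrow> ('v \<Rightarrow> bool)"
  assumes "non_expansive f"
  shows "(\<forall>I z. I \<noteq> {} \<longrightarrow> (\<exists>!y. y \<in> confs I \<and> subnet f I z y = y))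
     \<longleftrightarrow> \<not> (\<exists>I z. I \<noteq> {} \<and>
              (positive_circular (subnet f I z) I \<or> negative_circular (subnet f I z) I))"
proof
  assume A: "\<forall>I z. I \<noteq> {} \<longrightarrow> (\<exists>!y. y \<in> confs I \<and> subnet f I z y = y)"
  show "\<not> (\<exists>I z. I \<noteq> {} \<and>
              (positive_circular (subnet f I z) I \<or> negative_circular (subnet f I z) I))"
  proof
    assume "\<exists>I z. I \<noteq> {} \<and> (positive_circular (subnet f I z) I \<or> negative_circular (subnet f I z) I)"
    then obtain I z where I: "I \<noteq> {}" and c: "graph_is_full_cycle (subnet f I z) I"
      unfolding positive_circular_def negative_circular_def by blast
    have "\<not> uniq f I z" by (rule circ_nonuniq[OF c I])
    moreover have "uniq f I z" unfolding uniq_def using A I by simp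
    ultimately show False by simp
  qed
next
  assume B: "\<not> (\<exists>I z. I \<noteq> {} \<and>
              (positive_circular (subnet f I z) I \<or> negative_circular (subnet f I z) I))"
  show "\<forall>I z. I \<noteq> {} \<longrightarrow> (\<exists>!y. y \<in> confs I \<and> subnet f I z y = y)"
  proof (rule ccontr)
    assume "\<not> (\<forall>I z. I \<noteq> {} \<longrightarrow> (\<exists>!y. y \<in> confs I \<and> subnet f I z y = y))"
    then have "\<not> (\<forall>I z. I \<noteq> {} \<longrightarrow> uniq f I z)" unfolding uniq_def .
    then obtain I0 z0 where "I0 \<noteq> {}" "\<not> uniq f I0 z0" by blast
    then have I0: "I0 \<noteq> {} \<and> (\<exists>z. \<not> uniq f I0 z)" by blast
    obtain I where I: "I \<noteq> {} \<and> (\<exists>z. \<not> uniq f I z)"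
      and Imin: "\<And>I'. I' \<noteq> {} \<and> (\<exists>z. \<not> uniq f I' z) \<Longrightarrow> card I \<le> card I'"
      using ex_has_least_nat[of "\<lambda>I. I \<noteq> {} \<and> (\<exists>z. \<not> uniq f I z)" I0 card] I0 by blast
    obtain z where z: "\<not> uniq f I z" using I by blast
    have min: "uniq f J z'" if J: "J \<noteq> {}" "J \<subset> I" for J z'
    proof (rule ccontr)
      assume "\<not> uniq f J z'"
      then have "card I \<le> card J" using J by (intro Imin) auto
      moreover have "card J < card I" using J by (simp add: psubset_card_mono)
      ultimately show False by simp
    qed
    have minR: "\<And>J z'. J \<noteq> {} \<Longrightarrow> J \<subset> I \<Longrightarrow> uniq f J z'" by (rule min)
    have Ine: "I \<noteq> {}" using I by blast
    have "graph_is_full_cycle (subnet f I z) I" by (rule main[OF assms Ine z minR])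
    then have "positive_circular (subnet f I z) I \<or> negative_circular (subnet f I z) I"
      unfolding positive_circular_def negative_circular_def by blast
    then show False using B Ine by blast
  qed
qed

end
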